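(* There exists a constant $C$, independent of $h$, $T$, the interface location and $\beta^\pm$, such that for every $T\in\mathcal T_h^i$ and every $v_h\in S_h(T)$, with polynomial components $v_h^\pm\in\mathbb Q_1$ regarded as functions on $\omega_T$, $$\|\beta^+\nabla v_h^+\cdot\bar{\mathbf n}-\beta^-\nabla v_h^-\cdot\bar{\mathbf n}\|_{L^2(\tau_{\omega_T})}\le C(\beta^+-\beta^-)h^{1/2}|v_h^s|_{H^2(\omega_T)}\quad\text{for } s=+ \text{ and for } s=-.$$
   Context: $\mathbb Q_1$ is the space of trilinear polynomials. $\Gamma$ is a closed $C^2$ surface separating a bounded domain $\Omega\subset\mathbb R^3$ (a union of finitely many rectangular parallelepipeds) into $\Omega^\pm$, with reach $r_\Gamma$ (largest $r$ such that normal segments of length $2r$ centered at distinct points of $\Gamma$ are disjoint); $\beta=\beta^\pm>0$ on $\Omega^\pm$ with $\beta^+\ge\beta^-$. $\mathcal T_h$ is a Cartesian mesh by cubes of edge length $h$ with $h<r_\Gamma/(3\sqrt3)$, $\Gamma$ meeting every mesh edge in at most one point and the boundary of every mesh face in at most two points, no vertex on $\Gamma$. $\mathcal T_h^i$ is the set of elements meeting $\Gamma$, $\omega_T$ the union of elements $T'$ with $\overline{T'}\cap\overline T\ne\emptyset$, $T^\pm=T\cap\Omega^\pm$. For $T\in\mathcal T_h^i$, $K_T$ is the triangle spanned by three points where $\Gamma$ meets edges of $T$, selected as: if $\Gamma$ cuts 3 faces, all three; if $\Gamma$ cuts 4 faces separating the endpoints of an edge $e$ from the other vertices, the three farthest from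 $e$; if the four points lie on four parallel edges, any three; if $\Gamma$ cuts 5 faces, the three on parallel edges; if $\Gamma$ cuts 6 faces, every other one of the six (on three mutually orthogonal edges). $\tau(T)$ is the plane of $K_T$, $\bar{\mathbf n}$ its unit normal, $F$ the centroid of $K_T$, $L(X)=(X-D)\cdot\bar{\mathbf n}$ with $D$ a vertex of $K_T$, $\tau_{\omega_T}=\omega_T\cap\tau(T)$. $\mathcal C_T(p)=p+\left(\frac{\beta^-}{\beta^+}-1\right)(\nabla p(F)\cdot\bar{\mathbf n})L$, and $S_h(T)$ consists of the functions $v_h$ with $v_h^-:=v_h|_{T^-}=p$ and $v_h^+:=v_h|_{T^+}=\mathcal C_T(p)$ for some $p\in\mathbb Q_1$. *)

theory Defs
  imports "HOL-Analysis.Analysis"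
begin

type_synonym pt = "real^3"

text \<open>A local C^2 chart of the interface: on the open set U, \<Gamma> is the zero set of a
  C^2 function phi with gradient g (nonvanishing), \<Omega>^- is where phi < 0, \<Omega>^+ where phi > 0.\<close>
definition C2_chart ::
  "pt set \<Rightarrow> pt set \<Rightarrow> pt set \<Rightarrow> pt set \<Rightarrow> (pt \<Rightarrow> real) \<Rightarrow> (pt \<Rightarrow> pt) \<Rightarrow> bool" where
  "C2_chart \<Gamma> Om Op U phi g \<longleftrightarrow>
     open U \<and>
     (\<exists>H :: pt \<Rightarrow> real^3^3.
        (\<forall>y\<in>U. (phi has_derivative (\<lambda>v. g y \<bullet> v)) (at y) \<and>
                 (g has_derivative (\<lambda>v. H y *v v)) (at y)) \<and>
        continuous_on U H) \<and>
     (\<forall>y\<in>U. g y \<noteq> 0) \<and>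
     \<Gamma> \<inter> U = {y\<in>U. phi y = 0} \<and>
     Om \<inter> U = {y\<in>U. phi y < 0} \<and>
     Op \<inter> U = {y\<in>U. phi y > 0}"

definition C2_surface :: "pt set \<Rightarrow> pt set \<Rightarrow> pt set \<Rightarrow> bool" where
  "C2_surface \<Gamma> Om Op \<longleftrightarrow>
     (\<forall>x\<in>\<Gamma>. \<exists>U phi g. x \<in> U \<and> C2_chart \<Gamma> Om Op U phi g)"

text \<open>unit normal of \<Gamma> at x (pointing towards \<Omega>^+)\<close>
definition unit_normal :: "pt set \<Rightarrow> pt set \<Rightarrow> pt set \<Rightarrow> pt \<Rightarrow> pt \<Rightarrow> bool" where
  "unit_normal \<Gamma> Om Op x nv \<longleftrightarrow>
     (\<exists>U phi g. x \<in> U \<and> C2_chart \<Gamma> Om Op U phi g \<and> nv = (1 / norm (g x)) *\<^sub>R g x)"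

definition interface :: "pt set \<Rightarrow> pt set \<Rightarrow> pt set \<Rightarrow> pt set \<Rightarrow> bool" where
  "interface \<Omega> \<Gamma> Om Op \<longleftrightarrow>
     \<Gamma> \<noteq> {} \<and> compact \<Gamma> \<and> \<Gamma> \<subseteq> \<Omega> \<and> C2_surface \<Gamma> Om Op \<and>
     open Om \<and> open Op \<and> Om \<noteq> {} \<and> Op \<noteq> {} \<and> Om \<inter> Op = {} \<and>
     \<Omega> - \<Gamma> = Om \<union> Op"

text \<open>r does not exceed the reach: open normal segments of length 2r centred at distinct
  points of \<Gamma> are disjoint.  The reach r_\<Gamma> is the supremum of such r.\<close>
definition reach_ok :: "pt set \<Rightarrow> pt set \<Rightarrow> pt set \<Rightarrow> real \<Rightarrow> bool" where
  "reach_ok \<Gamma> Om Op r \<longleftrightarrow> 0 < r \<and>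
     (\<forall>x y nx ny s t. x \<in> \<Gamma> \<and> y \<in> \<Gamma> \<and> x \<noteq> y \<and>
        unit_normal \<Gamma> Om Op x nx \<and> unit_normal \<Gamma> Om Op y ny \<and> \<bar>s\<bar> < r \<and> \<bar>t\<bar> < r
        \<longrightarrow> x + s *\<^sub>R nx \<noteq> y + t *\<^sub>R ny)"

definition cell :: "pt \<Rightarrow> real \<Rightarrow> pt set" where
  "cell a h = box a (a + h *\<^sub>R One)"

definition ccell :: "pt \<Rightarrow> real \<Rightarrow> pt set" where
  "ccell a h = cbox a (a + h *\<^sub>R One)"

definition cell_vertices :: "pt \<Rightarrow> real \<Rightarrow> pt set" where
  "cell_vertices a h = {a + h *\<^sub>R (\<chi> i. if i \<in> J then 1 else 0) | J. True}"

definition edge :: "pt \<Rightarrow> real \<Rightarrow> 3 \<Rightarrow> pt set" where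
  "edge v h i = closed_segment v (v + h *\<^sub>R axis i 1)"

definition cell_edges :: "pt \<Rightarrow> real \<Rightarrow> pt set set" where
  "cell_edges a h = {edge v h i | v i. v \<in> cell_vertices a h \<and> v $ i = a $ i}"

definition on_edge_dir :: "pt \<Rightarrow> real \<Rightarrow> 3 \<Rightarrow> pt \<Rightarrow> bool" where
  "on_edge_dir a h i x \<longleftrightarrow> (\<exists>v. v \<in> cell_vertices a h \<and> v $ i = a $ i \<and> x \<in> edge v h i)"

definition cell_faces :: "pt \<Rightarrow> real \<Rightarrow> pt set set" where
  "cell_faces a h = {{x \<in> ccell a h. x $ i = a $ i + c} | i c. c \<in> {0, h}}"

definition face_bdry :: "pt \<Rightarrow> real \<Rightarrow> pt set \<Rightarrow> pt set" where
  "face_bdry a h f = f \<inter> \<Union>(cell_edges a h)"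

text \<open>Cartesian mesh of \<Omega> by cubes of edge h on the grid org + h Z^3; A = lower corners.\<close>
definition cartesian_mesh :: "pt set \<Rightarrow> real \<Rightarrow> pt \<Rightarrow> pt set \<Rightarrow> bool" where
  "cartesian_mesh \<Omega> h org A \<longleftrightarrow> 0 < h \<and> finite A \<and> A \<noteq> {} \<and>
     (\<forall>a\<in>A. \<forall>i. \<exists>z::int. a $ i = org $ i + h * of_int z) \<and>
     \<Omega> = interior (\<Union>a\<in>A. ccell a h)"

definition mesh_interface_ok :: "pt set \<Rightarrow> real \<Rightarrow> pt set \<Rightarrow> bool" where
  "mesh_interface_ok \<Gamma> h A \<longleftrightarrow>
     (\<forall>a\<in>A. (\<forall>e\<in>cell_edges a h. finite (\<Gamma> \<inter> e) \<and> card (\<Gamma> \<inter> e) \<le> 1) \<and>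
             (\<forall>f\<in>cell_faces a h. finite (\<Gamma> \<inter> face_bdry a h f) \<and> card (\<Gamma> \<inter> face_bdry a h f) \<le> 2) \<and>
             cell_vertices a h \<inter> \<Gamma> = {})"

definition patch :: "pt set \<Rightarrow> real \<Rightarrow> pt \<Rightarrow> pt set" where
  "patch A h a = (\<Union>b\<in>{b\<in>A. ccell b h \<inter> ccell a h \<noteq> {}}. ccell b h)"

definition cut_points :: "pt set \<Rightarrow> pt \<Rightarrow> real \<Rightarrow> pt set" where
  "cut_points \<Gamma> a h = \<Gamma> \<inter> \<Union>(cell_edges a h)"

definition cut_faces :: "pt set \<Rightarrow> pt \<Rightarrow> real \<Rightarrow> pt set set" where
  "cut_faces \<Gamma> a h = {f \<in> cell_faces a h. \<Gamma> \<inter> face_bdry a h f \<noteq> {}}"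

text \<open>S is the vertex set of K_T, selected according to the number of faces cut by \<Gamma>.\<close>
definition K_select :: "pt set \<Rightarrow> pt set \<Rightarrow> pt \<Rightarrow> real \<Rightarrow> pt set \<Rightarrow> bool" where
  "K_select \<Gamma> Om a h S \<longleftrightarrow>
     (let P = cut_points \<Gamma> a h; m = card (cut_faces \<Gamma> a h) in
      S \<subseteq> P \<and> card S = 3 \<and>
      ((m = 3 \<and> S = P) \<or>
       (m = 4 \<and>
          ((\<exists>v i. v \<in> cell_vertices a h \<and> v $ i = a $ i \<and>
              ({u \<in> cell_vertices a h. u \<in> Om} = {v, v + h *\<^sub>R axis i 1} \<or>
               {u \<in> cell_vertices a h. u \<notin> Om} = {v, v + h *\<^sub>R axis i 1}) \<and>
              (\<forall>x\<in>S. \<forall>y\<in>P - S. infdist y (edge v h i) \<le> infdist x (edge v h i)))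
           \<or> (\<exists>i. \<forall>x\<in>P. on_edge_dir a h i x))) \<or>
       (m = 5 \<and> (\<exists>i. S = {x \<in> P. on_edge_dir a h i x})) \<or>
       (m = 6 \<and>
          (\<forall>x\<in>S. \<forall>y\<in>S. x \<noteq> y \<longrightarrow> \<not> (\<exists>f\<in>cell_faces a h. x \<in> f \<and> y \<in> f)) \<and>
          (\<forall>x\<in>S. \<forall>y\<in>S. x \<noteq> y \<longrightarrow> \<not> (\<exists>i. on_edge_dir a h i x \<and> on_edge_dir a h i y)))))"

definition Q1 :: "(pt \<Rightarrow> real) set" where
  "Q1 = {p. \<exists>c :: nat \<Rightarrow> nat \<Rightarrow> nat \<Rightarrow> real. \<forall>x.
           p x = (\<Sum>i\<in>{0,1}. \<Sum>j\<in>{0,1}. \<Sum>k\<in>{0,1}.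
                    c i j k * (x $ 1) ^ i * (x $ 2) ^ j * (x $ 3) ^ k)}"

definition partial :: "3 \<Rightarrow> (pt \<Rightarrow> real) \<Rightarrow> pt \<Rightarrow> real" where
  "partial i f x = frechet_derivative f (at x) (axis i 1)"

definition grad :: "(pt \<Rightarrow> real) \<Rightarrow> pt \<Rightarrow> pt" where
  "grad f x = (\<chi> i. partial i f x)"

definition H2_semi :: "pt set \<Rightarrow> (pt \<Rightarrow> real) \<Rightarrow> real" where
  "H2_semi W f = sqrt (integral W (\<lambda>x. \<Sum>i\<in>UNIV. \<Sum>j\<in>UNIV. (partial i (partial j f) x)\<^sup>2))"

definition onb_perp :: "pt \<Rightarrow> pt \<times> pt" where
  "onb_perp n = (SOME uw. norm (fst uw) = 1 \<and> norm (snd uw) = 1 \<and> fst uw \<bullet> snd uw = 0 \<and>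
                          fst uw \<bullet> n = 0 \<and> snd uw \<bullet> n = 0)"

text \<open>L^2 norm of f on (W \<inter> plane through D with unit normal n), w.r.t. surface measure,
  computed through an isometric parametrisation of the plane.\<close>
definition L2_plane :: "pt set \<Rightarrow> pt \<Rightarrow> pt \<Rightarrow> (pt \<Rightarrow> real) \<Rightarrow> real" where
  "L2_plane W D n f =
     (let u = fst (onb_perp n); w = snd (onb_perp n);
          X = (\<lambda>st::real \<times> real. D + fst st *\<^sub>R u + snd st *\<^sub>R w)
      in sqrt (integral {st. X st \<in> W} (\<lambda>st. (f (X st))\<^sup>2)))"

definition C_T :: "real \<Rightarrow> real \<Rightarrow> pt \<Rightarrow> pt \<Rightarrow> pt \<Rightarrow> (pt \<Rightarrow> real) \<Rightarrow> pt \<Rightarrow> real" where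
  "C_T bm bp F n D p = (\<lambda>X. p X + (bm / bp - 1) * (grad p F \<bullet> n) * ((X - D) \<bullet> n))"

end

theory Submission
  imports Defs
begin
lemma cont_compact_int:
  fixes f :: "real^3 \<Rightarrow> real"
  assumes "compact S" "continuous_on S f"
  shows "f integrable_on S"
proof -
  have "integrable lborel (\<lambda>x. indicator S x *\<^sub>R f x)"
    using borel_integrable_compact[OF assms] .
  from has_integral_integral_lborel[OF this]
  have "(\<lambda>x. indicator S x *\<^sub>R f x) integrable_on UNIV" by blast
  moreover have "(\<lambda>x. indicator S x *\<^sub>R f x) = (\<lambda>x. if x \<in> S then f x else 0)"
    by (auto simp: indicator_def)
  ultimately show ?thesis
    by (simp add: integrable_restrict_UNIV)
qed

definition tri :: "(nat \<Rightarrow> real) \<Rightarrow> real^3 \<Rightarrow> real" where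
  "tri k x = k 0 + k 1 * x$1 + k 2 * x$2 + k 3 * x$3 + k 4 * x$1 * x$2 + k 5 * x$1 * x$3
     + k 6 * x$2 * x$3 + k 7 * x$1 * x$2 * x$3"

definition dco :: "3 \<Rightarrow> (nat \<Rightarrow> real) \<Rightarrow> nat \<Rightarrow> real" where
  "dco i k = (if i = 1 then (\<lambda>m. if m = 0 then k 1 else if m = 2 then k 4 else if m = 3 then k 5
                 else if m = 6 then k 7 else 0)
              else if i = 2 then (\<lambda>m. if m = 0 then k 2 else if m = 1 then k 4 else if m = 3 then k 6
                 else if m = 5 then k 7 else 0)
              else (\<lambda>m. if m = 0 then k 3 else if m = 1 then k 5 else if m = 2 then k 6
                 else if m = 4 then k 7 else 0))"

lemma tri_deriv:
  "(tri k has_derivative (\<lambda>v. v$1 * tri (dco 1 k) x + v$2 * tri (dco 2 k) x + v$3 * tri (dco 3 k) x)) (at x)"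
  unfolding tri_def[abs_def]
  apply (rule has_derivative_eq_rhs)
   apply (auto intro!: derivative_eq_intros bounded_linear.has_derivative[OF bounded_linear_vec_nth])[1]
  apply (rule ext)
  apply (simp add: dco_def)
  apply (simp add: algebra_simps)
  done

lemma partial_tri: "partial i (tri k) = tri (dco i k)"
proof
  fix x
  have "partial i (tri k) x = (\<lambda>v. v$1 * tri (dco 1 k) x + v$2 * tri (dco 2 k) x + v$3 * tri (dco 3 k) x) (axis i 1)"
    unfolding partial_def by (simp only: frechet_derivative_at[OF tri_deriv, symmetric])
  moreover have "i = 1 \<or> i = 2 \<or> i = 3" using exhaust_3 by blast
  ultimately show "partial i (tri k) x = tri (dco i k) x"
    by (auto simp: axis_def)
qed

lemma Q1_tri: assumes "p \<in> Q1" shows "\<exists>k. p = tri k"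
proof -
  from assms obtain c where c: "\<And>x. p x = (\<Sum>i\<in>{0,1}. \<Sum>j\<in>{0,1}. \<Sum>k\<in>{0,1}.
                    c i j k * (x $ 1) ^ i * (x $ 2) ^ j * (x $ 3) ^ k)" unfolding Q1_def by blast
  define k where "k = (\<lambda>m::nat. if m = 0 then c 0 0 0 else if m = 1 then c 1 0 0 else if m = 2 then c 0 1 0
     else if m = 3 then c 0 0 1 else if m = 4 then c 1 1 0 else if m = 5 then c 1 0 1 else if m = 6 then c 0 1 1 else c 1 1 1)"
  have "p = tri k"
    by (rule ext) (simp add: c k_def tri_def algebra_simps)
  then show ?thesis by blast
qed
lemma onb_exists:
  fixes n :: "real^3" assumes "norm n = 1"
  shows "\<exists>uw. norm (fst uw) = 1 \<and> norm (snd uw) = 1 \<and> fst uw \<bullet> snd uw = 0 \<and>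
                          fst uw \<bullet> n = 0 \<and> snd uw \<bullet> n = 0"
proof (cases "n$1 = 0 \<and> n$2 = 0")
  case True
  have "(axis 1 1 :: real^3) \<bullet> axis 2 1 = 0" by (simp add: axis_def inner_vec_def sum_3)
  moreover have "(axis 1 1 :: real^3) \<bullet> n = 0" "(axis 2 1 :: real^3) \<bullet> n = 0"
    using True by (simp_all add: axis_def inner_vec_def sum_3)
  ultimately show ?thesis by (intro exI[of _ "(axis 1 1, axis 2 1)"]) (simp add: norm_axis_1)
next
  case False
  define r where "r = sqrt ((n$1)^2 + (n$2)^2)"
  have r2: "r^2 = (n$1)^2 + (n$2)^2" unfolding r_def by simp
  have rpos: "r > 0" using False unfolding r_def
    by (simp add: sum_power2_gt_zero_iff)
  have n1: "(n$1)^2 + (n$2)^2 + (n$3)^2 = 1"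
    using assms by (simp add: norm_eq_sqrt_inner inner_vec_def sum_3 power2_eq_square)
  define a :: "real^3" where "a = vector [- n$2, n$1, 0]"
  define b :: "real^3" where "b = vector [- n$1 * n$3, - n$2 * n$3, r^2]"
  have aa: "a \<bullet> a = r^2" unfolding a_def r2 by (simp add: inner_vec_def sum_3 power2_eq_square)
  have bb: "b \<bullet> b = (n$1 * n$3)^2 + (n$2 * n$3)^2 + (r^2)^2" unfolding b_def
    by (simp add: inner_vec_def sum_3 power2_eq_square)
  also have "\<dots> = r^2" using n1 r2 by algebra
  finally have bb1: "b \<bullet> b = r^2" .
  have ab: "a \<bullet> b = 0" unfolding a_def b_def by (simp add: inner_vec_def sum_3 algebra_simps)
  have an: "a \<bullet> n = 0" unfolding a_def by (simp add: inner_vec_def sum_3 algebra_simps)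
  have "b \<bullet> n = - (n$1 * n$3) * n$1 - (n$2 * n$3) * n$2 + r^2 * n$3" unfolding b_def
    by (simp add: inner_vec_def sum_3)
  also have "\<dots> = 0" using r2 by algebra
  finally have bn: "b \<bullet> n = 0" .
  define u where "u = (1/r) *\<^sub>R a"
  define w where "w = (1/r) *\<^sub>R b"
  have "u \<bullet> u = 1" "w \<bullet> w = 1" "u \<bullet> w = 0" "u \<bullet> n = 0" "w \<bullet> n = 0"
    unfolding u_def w_def using aa bb1 ab an bn rpos by (simp_all add: power2_eq_square)
  then show ?thesis
    by (intro exI[of _ "(u, w)"]) (simp add: norm_eq_sqrt_inner)
qed

lemma onb_perp_props:
  fixes n :: "real^3" assumes "norm n = 1"
  shows "norm (fst (onb_perp n)) = 1" "norm (snd (onb_perp n)) = 1" "fst (onb_perp n) \<bullet> snd (onb_perp n) = 0"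
  using someI_ex[OF onb_exists[OF assms]] unfolding onb_perp_def by auto

lemma plane_upper:
  fixes W :: "(real^3) set" and f :: "real^3 \<Rightarrow> real"
  assumes n: "norm n = 1" and K: "K \<ge> 0" and R: "R \<ge> 0"
    and fb: "\<forall>X\<in>W. \<bar>f X\<bar> \<le> K" and Wb: "\<forall>X\<in>W. norm (X - D) \<le> R"
  shows "L2_plane W D n f \<le> K * (2 * R)"
proof -
  define u where "u = fst (onb_perp n)"
  define w where "w = snd (onb_perp n)"
  have u1: "norm u = 1" and w1: "norm w = 1" and uw: "u \<bullet> w = 0"
    using onb_perp_props[OF n] unfolding u_def w_def by auto
  define Xf where "Xf = (\<lambda>st::real \<times> real. D + fst st *\<^sub>R u + snd st *\<^sub>R w)"
  define P where "P = {st. Xf st \<in> W}"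
  define g where "g = (\<lambda>st. (f (Xf st))\<^sup>2)"
  have L: "L2_plane W D n f = sqrt (integral P g)"
    unfolding L2_plane_def Let_def u_def[symmetric] w_def[symmetric] Xf_def P_def g_def by simp
  define B :: "(real \<times> real) set" where "B = cbox (-R, -R) (R, R)"
  have PB: "P \<subseteq> B"
  proof
    fix st assume st: "st \<in> P"
    obtain s t where st_eq: "st = (s, t)" by (cases st)
    have nr: "norm (Xf st - D) \<le> R" using st Wb unfolding P_def by auto
    have uu: "u \<bullet> u = 1" using u1 by (simp add: norm_eq_sqrt_inner)
    have ww: "w \<bullet> w = 1" using w1 by (simp add: norm_eq_sqrt_inner)
    have wu: "w \<bullet> u = 0" using uw by (simp add: inner_commute)
    have "(Xf st - D) \<bullet> u = s" unfolding Xf_def st_eq using uu wu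
      by (simp add: inner_add_left)
    moreover have "(Xf st - D) \<bullet> w = t" unfolding Xf_def st_eq using ww uw
      by (simp add: inner_add_left)
    moreover have "\<bar>(Xf st - D) \<bullet> u\<bar> \<le> R" "\<bar>(Xf st - D) \<bullet> w\<bar> \<le> R"
      using Cauchy_Schwarz_ineq2[of "Xf st - D" u] Cauchy_Schwarz_ineq2[of "Xf st - D" w] u1 w1 nr
      by auto
    ultimately show "st \<in> B" unfolding B_def st_eq by auto
  qed
  have cB: "Henstock_Kurzweil_Integration.content B = (2 * R)^2" unfolding B_def content_Pair using R
    by (simp add: power2_eq_square)
  have I: "integral P g \<le> K^2 * (2 * R)^2"
  proof (cases "g integrable_on P")
    case True
    then have "(g has_integral integral P g) P" by (simp add: integrable_integral)
    then have "((\<lambda>x. if x \<in> P then g x else 0) has_integral integral P g) B"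
      using has_integral_restrict_Int[of P g "integral P g" B] PB by (simp add: Int_absorb2)
    moreover have "((\<lambda>x. K^2) has_integral Henstock_Kurzweil_Integration.content B *\<^sub>R K^2) B"
      unfolding B_def by (rule has_integral_const)
    moreover have "\<And>x. x \<in> B \<Longrightarrow> (if x \<in> P then g x else 0) \<le> K^2"
    proof -
      fix x assume "x \<in> B"
      show "(if x \<in> P then g x else 0) \<le> K^2"
      proof (cases "x \<in> P")
        case True
        then have "\<bar>f (Xf x)\<bar> \<le> K" using fb unfolding P_def by auto
        then have "(f (Xf x))^2 \<le> K^2"
          using abs_le_square_iff[of "f (Xf x)" K] K by simp
        then show ?thesis using True unfolding g_def by simp
      qed simp
    qed
    ultimately have "integral P g \<le> Henstock_Kurzweil_Integration.content B *\<^sub>R K^2" by (rule has_integral_le)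
    then show ?thesis using cB by (simp add: mult.commute)
  next
    case False
    then show ?thesis by (simp add: not_integrable_integral)
  qed
  have "sqrt (integral P g) \<le> sqrt ((K * (2 * R))^2)"
    using I by (simp add: power_mult_distrib)
  also have "\<dots> = K * (2 * R)" using K R by simp
  finally show ?thesis using L by simp
qed


lemma lin_bound:
  fixes h a t al be :: real
  assumes h: "h > 0" and t: "a - h \<le> t" "t \<le> a + 2 * h"
  shows "\<bar>al + be * t\<bar> \<le> 3 * max \<bar>al + be * a\<bar> \<bar>al + be * (a + h)\<bar>"
proof -
  define s where "s = (t - a) / h"
  define l0 where "l0 = al + be * a"
  define l1 where "l1 = al + be * (a + h)"
  define M where "M = max \<bar>l0\<bar> \<bar>l1\<bar>"
  have ts: "t = a + s * h" unfolding s_def using h by simp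
  have s1: "-1 \<le> s" "s \<le> 2" unfolding s_def using h t by (simp_all add: field_simps)
  have eq: "al + be * t = (1 - s) * l0 + s * l1" unfolding l0_def l1_def ts by (simp add: algebra_simps)
  have "\<bar>(1 - s) * l0\<bar> \<le> \<bar>1 - s\<bar> * M" unfolding M_def by (simp add: abs_mult mult_left_mono)
  moreover have "\<bar>s * l1\<bar> \<le> \<bar>s\<bar> * M" unfolding M_def by (simp add: abs_mult mult_left_mono)
  moreover have "\<bar>1 - s\<bar> + \<bar>s\<bar> \<le> 3" using s1 by auto
  moreover have "M \<ge> 0" unfolding M_def by simp
  ultimately have "\<bar>al + be * t\<bar> \<le> 3 * M" unfolding eq
  proof -
    assume A: "\<bar>(1 - s) * l0\<bar> \<le> \<bar>1 - s\<bar> * M" "\<bar>s * l1\<bar> \<le> \<bar>s\<bar> * M"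
      "\<bar>1 - s\<bar> + \<bar>s\<bar> \<le> 3" "M \<ge> 0"
    have "\<bar>(1 - s) * l0 + s * l1\<bar> \<le> \<bar>(1 - s) * l0\<bar> + \<bar>s * l1\<bar>" by (rule abs_triangle_ineq)
    also have "\<dots> \<le> (\<bar>1 - s\<bar> + \<bar>s\<bar>) * M" using A(1,2) by (simp add: distrib_right)
    also have "\<dots> \<le> 3 * M" using A(3,4) by (rule mult_right_mono)
    finally show "\<bar>(1 - s) * l0 + s * l1\<bar> \<le> 3 * M" .
  qed
  then show ?thesis unfolding M_def l0_def l1_def .
qed

lemma lin_sub:
  fixes h a al be :: real
  assumes h: "h > 0"
  obtains c where "c = a \<or> c = a + 3 * h / 4"
    "\<And>t. c \<le> t \<Longrightarrow> t \<le> c + h / 4 \<Longrightarrow> max \<bar>al + be * a\<bar> \<bar>al + be * (a + h)\<bar> / 2 \<le> \<bar>al + be * t\<bar>"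
proof -
  define l0 where "l0 = al + be * a"
  define l1 where "l1 = al + be * (a + h)"
  have bh: "be * h = l1 - l0" unfolding l0_def l1_def by (simp add: algebra_simps)
  show ?thesis
  proof (cases "\<bar>l0\<bar> \<le> \<bar>l1\<bar>")
    case True
    show ?thesis
    proof (rule that[of "a + 3 * h / 4"])
      fix t assume t: "a + 3 * h / 4 \<le> t" "t \<le> a + 3 * h / 4 + h / 4"
      define d where "d = (a + h - t) / h"
      have d: "0 \<le> d" "d \<le> 1/4" unfolding d_def using h t by (simp_all add: field_simps)
      have "d * (l1 - l0) = be * (a + h - t)" unfolding bh[symmetric] d_def using h by simp
      then have "al + be * t = l1 - d * (l1 - l0)" unfolding l1_def by (simp add: algebra_simps)
      moreover have "\<bar>d * (l1 - l0)\<bar> \<le> \<bar>l1\<bar> / 2"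
      proof -
        have "\<bar>l1 - l0\<bar> \<le> 2 * \<bar>l1\<bar>" using True by linarith
        then have "\<bar>d\<bar> * \<bar>l1 - l0\<bar> \<le> (1/4) * (2 * \<bar>l1\<bar>)"
          using d by (intro mult_mono) auto
        then show ?thesis by (simp add: abs_mult)
      qed
      ultimately have "\<bar>l1\<bar> / 2 \<le> \<bar>al + be * t\<bar>" by linarith
      then show "max \<bar>al + be * a\<bar> \<bar>al + be * (a + h)\<bar> / 2 \<le> \<bar>al + be * t\<bar>"
        using True unfolding l0_def l1_def by simp
    qed simp
  next
    case False
    show ?thesis
    proof (rule that[of "a"])
      fix t assume t: "a \<le> t" "t \<le> a + h / 4"
      define d where "d = (t - a) / h"
      have d: "0 \<le> d" "d \<le> 1/4" unfolding d_def using h t by (simp_all add: field_simps)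
      have "d * (l1 - l0) = be * (t - a)" unfolding bh[symmetric] d_def using h by simp
      then have "al + be * t = l0 + d * (l1 - l0)" unfolding l0_def by (simp add: algebra_simps)
      moreover have "\<bar>d * (l1 - l0)\<bar> \<le> \<bar>l0\<bar> / 2"
      proof -
        have "\<bar>l1 - l0\<bar> \<le> 2 * \<bar>l0\<bar>" using False by linarith
        then have "\<bar>d\<bar> * \<bar>l1 - l0\<bar> \<le> (1/4) * (2 * \<bar>l0\<bar>)"
          using d by (intro mult_mono) auto
        then show ?thesis by (simp add: abs_mult)
      qed
      ultimately have "\<bar>l0\<bar> / 2 \<le> \<bar>al + be * t\<bar>" by linarith
      then show "max \<bar>al + be * a\<bar> \<bar>al + be * (a + h)\<bar> / 2 \<le> \<bar>al + be * t\<bar>"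
        using False unfolding l0_def l1_def by simp
    qed simp
  qed
qed

lemma One_nth [simp]: "(One::real^'n) $ i = 1"
  by (metis Cart_1 one_index)

lemma corner_nth: "(a + h *\<^sub>R (One::real^'n)) $ i = a $ i + h"
  by (simp only: vector_add_component vector_scaleR_component One_nth real_scaleR_def mult_1_right)

lemma cube_lower:
  fixes a :: "real^3" and k :: 3 and al be h :: real
  assumes h: "h > 0"
  shows "(max \<bar>al + be * a$k\<bar> \<bar>al + be * (a$k + h)\<bar>)^2 * h^3 / 16
           \<le> integral (cbox a (a + h *\<^sub>R One)) (\<lambda>x. (al + be * x$k)^2)"
proof -
  define M where "M = max \<bar>al + be * a$k\<bar> \<bar>al + be * (a$k + h)\<bar>"
  have M0: "M \<ge> 0" unfolding M_def by simp
  obtain c where c: "c = a$k \<or> c = a$k + 3 * h / 4"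
    and cb: "\<And>t. c \<le> t \<Longrightarrow> t \<le> c + h / 4 \<Longrightarrow> M / 2 \<le> \<bar>al + be * t\<bar>"
    using lin_sub[OF h, of "a$k" al be] unfolding M_def by metis
  define lo :: "real^3" where "lo = (\<chi> i. if i = k then c else a$i)"
  define hi :: "real^3" where "hi = (\<chi> i. if i = k then c + h / 4 else a$i + h)"
  define Q where "Q = cbox a (a + h *\<^sub>R One)"
  define Bs where "Bs = cbox lo hi"
  have BsQ: "Bs \<subseteq> Q"
  proof
    fix x assume "x \<in> Bs"
    then have x: "\<And>i. lo$i \<le> x$i \<and> x$i \<le> hi$i" unfolding Bs_def mem_box_cart by blast
    have "a$i \<le> x$i \<and> x$i \<le> a$i + h" for i
      using x[of i] c h unfolding lo_def hi_def by (auto split: if_splits)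
    then show "x \<in> Q" unfolding Q_def mem_box_cart corner_nth by simp
  qed
  have lohi: "\<And>i. lo$i \<le> hi$i" unfolding lo_def hi_def using h by simp
  then have "Bs \<noteq> {}" unfolding Bs_def interval_eq_empty_cart by (simp add: not_less)
  then have "Henstock_Kurzweil_Integration.content Bs = prod (\<lambda>i. hi$i - lo$i) UNIV" unfolding Bs_def by (rule content_cbox_cart)
  also have "\<dots> = (hi$k - lo$k) * prod (\<lambda>i. hi$i - lo$i) (UNIV - {k})"
    by (simp add: prod.remove)
  also have "prod (\<lambda>i. hi$i - lo$i) (UNIV - {k}) = prod (\<lambda>i. h) (UNIV - {k})"
    by (rule prod.cong) (auto simp: lo_def hi_def)
  also have "\<dots> = h^2" by (simp add: card_Diff_singleton)
  finally have cBs: "Henstock_Kurzweil_Integration.content Bs = h^3 / 4" unfolding lo_def hi_def by (simp add: power2_eq_square power3_eq_cube)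
  have fint: "(\<lambda>x. (al + be * x$k)^2) integrable_on Q"
    unfolding Q_def by (intro integrable_continuous continuous_intros)
  have g: "((\<lambda>x. if x \<in> Bs then (M/2)^2 else 0) has_integral (Henstock_Kurzweil_Integration.content Bs *\<^sub>R (M/2)^2)) Q"
  proof -
    have i1: "((\<lambda>x. (M/2)^2) has_integral (Henstock_Kurzweil_Integration.content Bs *\<^sub>R (M/2)^2)) (Bs \<inter> Q)"
      using BsQ has_integral_const[of "(M/2)^2" lo hi] unfolding Bs_def by (simp add: Int_absorb2)
    show ?thesis by (subst has_integral_restrict_Int[of Bs "\<lambda>x. (M/2)^2"]) (rule i1)
  qed
  have le: "(if x \<in> Bs then (M/2)^2 else 0) \<le> (al + be * x$k)^2" for x
  proof (cases "x \<in> Bs")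
    case True
    then have "lo$k \<le> x$k" "x$k \<le> hi$k" unfolding Bs_def mem_box_cart by blast+
    moreover have "lo$k = c" "hi$k = c + h/4" by (simp_all add: lo_def hi_def)
    ultimately have "c \<le> x$k" "x$k \<le> c + h/4" by simp_all
    then have "M/2 \<le> \<bar>al + be * x$k\<bar>" by (rule cb)
    then have "(M/2)^2 \<le> (\<bar>al + be * x$k\<bar>)^2" using M0 by (intro power_mono) auto
    then show ?thesis using True by simp
  qed simp
  have "Henstock_Kurzweil_Integration.content Bs *\<^sub>R (M/2)^2 \<le> integral Q (\<lambda>x. (al + be * x$k)^2)"
    by (rule has_integral_le[OF g integrable_integral[OF fint]]) (rule le)
  then show ?thesis unfolding M_def[symmetric] Q_def[symmetric] using cBs
    by (simp add: power_divide field_simps)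
qed

definition Mlin :: "real \<Rightarrow> real \<Rightarrow> real \<Rightarrow> real \<Rightarrow> real" where
  "Mlin al be t h = max \<bar>al + be * t\<bar> \<bar>al + be * (t + h)\<bar>"

lemma grad_tri_n: "grad (tri k) X \<bullet> n = tri (dco 1 k) X * n$1 + tri (dco 2 k) X * n$2 + tri (dco 3 k) X * n$3"
  by (simp add: grad_def inner_vec_def sum_3 partial_tri)

definition addlin :: "real \<Rightarrow> real^3 \<Rightarrow> real^3 \<Rightarrow> (nat \<Rightarrow> real) \<Rightarrow> nat \<Rightarrow> real" where
  "addlin cc D n k = (\<lambda>m. k m + (if m = 0 then - cc * (D \<bullet> n) else if m = 1 then cc * n$1
      else if m = 2 then cc * n$2 else if m = 3 then cc * n$3 else 0))"

lemma CT_tri: "C_T bm bp F n D (tri k) = tri (addlin ((bm / bp - 1) * (grad (tri k) F \<bullet> n)) D n k)"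
  unfolding C_T_def
  by (rule ext) (simp add: tri_def addlin_def inner_diff_left inner_vec_def sum_3 algebra_simps)

lemma dco2_addlin: "dco i (dco j (addlin cc D n k)) = dco i (dco j k)"
proof -
  have "i = 1 \<or> i = 2 \<or> i = 3" "j = 1 \<or> j = 2 \<or> j = 3" using exhaust_3 by blast+
  then show ?thesis by (auto simp: dco_def addlin_def)
qed

lemma dco_addlin: "tri (dco i (addlin cc D n k)) X = tri (dco i k) X + cc * n$i"
proof -
  have "i = 1 \<or> i = 2 \<or> i = 3" using exhaust_3 by blast
  then show ?thesis by (auto simp: dco_def addlin_def tri_def)
qed

lemma jump_eq:
  assumes bp: "bp > 0" and n: "norm n = 1"
  shows "bp * (grad (C_T bm bp F n D (tri k)) X \<bullet> n) - bm * (grad (tri k) X \<bullet> n)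
       = (bp - bm) * (grad (tri k) X \<bullet> n - grad (tri k) F \<bullet> n)"
proof -
  define g where "g = grad (tri k) F \<bullet> n"
  define cc where "cc = (bm / bp - 1) * g"
  have nn: "n$1 * n$1 + n$2 * n$2 + n$3 * n$3 = 1"
    using n by (simp add: norm_eq_sqrt_inner inner_vec_def sum_3)
  have "grad (C_T bm bp F n D (tri k)) X \<bullet> n = grad (tri k) X \<bullet> n + cc * (n$1 * n$1 + n$2 * n$2 + n$3 * n$3)"
    unfolding CT_tri g_def[symmetric] cc_def[symmetric] unfolding grad_tri_n dco_addlin by (simp add: algebra_simps)
  also have "\<dots> = grad (tri k) X \<bullet> n + cc" using nn by simp
  finally have e: "grad (C_T bm bp F n D (tri k)) X \<bullet> n = grad (tri k) X \<bullet> n + cc" .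
  have "bp * cc = (bm - bp) * g" unfolding cc_def using bp by (simp add: field_simps)
  then show ?thesis unfolding e g_def[symmetric] by (simp add: algebra_simps)
qed

lemma two_prod_bound:
  fixes u v w z A B C E :: real
  assumes "\<bar>u\<bar> \<le> A" "\<bar>v\<bar> \<le> B" "\<bar>w\<bar> \<le> C" "\<bar>z\<bar> \<le> E"
  shows "\<bar>u * v + w * z\<bar> \<le> A * B + C * E"
proof -
  have "\<bar>u * v\<bar> \<le> A * B" unfolding abs_mult using assms by (intro mult_mono) auto
  moreover have "\<bar>w * z\<bar> \<le> C * E" unfolding abs_mult using assms by (intro mult_mono) auto
  ultimately show ?thesis by (meson abs_triangle_ineq add_mono order_trans)
qed

lemma Gdiff_bound:
  fixes a X F n :: "real^3"
  assumes h: "h > 0" and X: "\<And>i. a$i - h \<le> X$i \<and> X$i \<le> a$i + 2 * h"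
    and F: "\<And>i. a$i \<le> F$i \<and> F$i \<le> a$i + h" and n: "norm n = 1"
  shows "\<bar>grad (tri k) X \<bullet> n - grad (tri k) F \<bullet> n\<bar>
     \<le> 12 * h * (Mlin (k 4) (k 7) (a$3) h + Mlin (k 5) (k 7) (a$2) h + Mlin (k 6) (k 7) (a$1) h)"
proof -
  define M12 where "M12 = Mlin (k 4) (k 7) (a$3) h"
  define M13 where "M13 = Mlin (k 5) (k 7) (a$2) h"
  define M23 where "M23 = Mlin (k 6) (k 7) (a$1) h"
  have lb: "\<And>al be t c. c - h \<le> t \<Longrightarrow> t \<le> c + 2 * h \<Longrightarrow> \<bar>al + be * t\<bar> \<le> 3 * Mlin al be c h"
    unfolding Mlin_def using lin_bound[OF h] by blast
  have Fr: "a$i - h \<le> F$i \<and> F$i \<le> a$i + 2 * h" for i using F[of i] h by auto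
  have b12X: "\<bar>k 4 + k 7 * X$3\<bar> \<le> 3 * M12" unfolding M12_def using X[of 3] lb by blast
  have b13X: "\<bar>k 5 + k 7 * X$2\<bar> \<le> 3 * M13" unfolding M13_def using X[of 2] lb by blast
  have b13F: "\<bar>k 5 + k 7 * F$2\<bar> \<le> 3 * M13" unfolding M13_def using Fr[of 2] lb by blast
  have b23F: "\<bar>k 6 + k 7 * F$1\<bar> \<le> 3 * M23" unfolding M23_def using Fr[of 1] lb by blast
  have dX: "\<bar>X$i - F$i\<bar> \<le> 2 * h" for i using X[of i] F[of i] by auto
  have e1: "tri (dco 1 k) X - tri (dco 1 k) F = (X$2 - F$2) * (k 4 + k 7 * X$3) + (X$3 - F$3) * (k 5 + k 7 * F$2)"
    by (simp add: tri_def dco_def algebra_simps)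
  have e2: "tri (dco 2 k) X - tri (dco 2 k) F = (X$1 - F$1) * (k 4 + k 7 * X$3) + (X$3 - F$3) * (k 6 + k 7 * F$1)"
    by (simp add: tri_def dco_def algebra_simps)
  have e3: "tri (dco 3 k) X - tri (dco 3 k) F = (X$1 - F$1) * (k 5 + k 7 * X$2) + (X$2 - F$2) * (k 6 + k 7 * F$1)"
    by (simp add: tri_def dco_def algebra_simps)
  have f1: "\<bar>tri (dco 1 k) X - tri (dco 1 k) F\<bar> \<le> 2 * h * (3 * M12) + 2 * h * (3 * M13)"
    unfolding e1 by (rule two_prod_bound) (use dX b12X b13F in auto)
  have f2: "\<bar>tri (dco 2 k) X - tri (dco 2 k) F\<bar> \<le> 2 * h * (3 * M12) + 2 * h * (3 * M23)"
    unfolding e2 by (rule two_prod_bound) (use dX b12X b23F in auto)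
  have f3: "\<bar>tri (dco 3 k) X - tri (dco 3 k) F\<bar> \<le> 2 * h * (3 * M13) + 2 * h * (3 * M23)"
    unfolding e3 by (rule two_prod_bound) (use dX b13X b23F in auto)
  have nb: "\<bar>n$i\<bar> \<le> 1" for i using component_le_norm_cart[of n i] n by simp
  define T1 where "T1 = (tri (dco 1 k) X - tri (dco 1 k) F) * n$1"
  define T2 where "T2 = (tri (dco 2 k) X - tri (dco 2 k) F) * n$2"
  define T3 where "T3 = (tri (dco 3 k) X - tri (dco 3 k) F) * n$3"
  have g1: "\<bar>T1\<bar> \<le> (2 * h * (3 * M12) + 2 * h * (3 * M13)) * 1" unfolding T1_def abs_mult
    by (rule mult_mono[OF f1 nb order_trans[OF abs_ge_zero f1] abs_ge_zero])
  have g2: "\<bar>T2\<bar> \<le> (2 * h * (3 * M12) + 2 * h * (3 * M23)) * 1" unfolding T2_def abs_mult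
    by (rule mult_mono[OF f2 nb order_trans[OF abs_ge_zero f2] abs_ge_zero])
  have g3: "\<bar>T3\<bar> \<le> (2 * h * (3 * M13) + 2 * h * (3 * M23)) * 1" unfolding T3_def abs_mult
    by (rule mult_mono[OF f3 nb order_trans[OF abs_ge_zero f3] abs_ge_zero])
  have "grad (tri k) X \<bullet> n - grad (tri k) F \<bullet> n = T1 + (T2 + T3)"
    unfolding grad_tri_n T1_def T2_def T3_def by (simp add: algebra_simps)
  then have "\<bar>grad (tri k) X \<bullet> n - grad (tri k) F \<bullet> n\<bar> \<le> 12 * h * (M12 + M13 + M23)"
    using g1 g2 g3 abs_triangle_ineq[of T1 "T2 + T3"] abs_triangle_ineq[of T2 T3] by argo
  then show ?thesis unfolding M12_def M13_def M23_def .
qed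

lemma H2_integrand_tri:
  "(\<Sum>i\<in>UNIV. \<Sum>j\<in>UNIV. (partial i (partial j (tri k)) x)\<^sup>2)
     = 2 * ((k 4 + k 7 * x$3)^2 + (k 5 + k 7 * x$2)^2 + (k 6 + k 7 * x$1)^2)"
  by (simp add: partial_tri sum_3 tri_def dco_def)

lemma H2_lower:
  fixes a :: "real^3" and W :: "(real^3) set"
  assumes h: "h > 0" and W: "compact W" and aW: "ccell a h \<subseteq> W"
  shows "h^3 / 16 * ((Mlin (k 4) (k 7) (a$3) h)^2 + (Mlin (k 5) (k 7) (a$2) h)^2 + (Mlin (k 6) (k 7) (a$1) h)^2)
     \<le> integral W (\<lambda>x. \<Sum>i\<in>UNIV. \<Sum>j\<in>UNIV. (partial i (partial j (tri k)) x)\<^sup>2)"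
proof -
  define q1 where "q1 = (\<lambda>x::real^3. (k 4 + k 7 * x$3)^2)"
  define q2 where "q2 = (\<lambda>x::real^3. (k 5 + k 7 * x$2)^2)"
  define q3 where "q3 = (\<lambda>x::real^3. (k 6 + k 7 * x$1)^2)"
  define f where "f = (\<lambda>x::real^3. 2 * (q1 x + q2 x + q3 x))"
  have fe: "(\<lambda>x. \<Sum>i\<in>UNIV. \<Sum>j\<in>UNIV. (partial i (partial j (tri k)) x)\<^sup>2) = f"
    unfolding f_def q1_def q2_def q3_def by (rule ext) (rule H2_integrand_tri)
  define Q where "Q = cbox a (a + h *\<^sub>R One)"
  have QW: "Q \<subseteq> W" using aW unfolding Q_def ccell_def .
  have cq: "continuous_on U q1" "continuous_on U q2" "continuous_on U q3" for U
    unfolding q1_def q2_def q3_def by (intro continuous_intros)+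
  have cf: "continuous_on U f" for U unfolding f_def by (intro continuous_intros cq)
  have iq: "q1 integrable_on Q" "q2 integrable_on Q" "q3 integrable_on Q"
    unfolding Q_def by (intro integrable_continuous cq)+
  have fQ: "f integrable_on Q" unfolding Q_def by (intro integrable_continuous cf)
  have fW: "f integrable_on W" by (rule cont_compact_int[OF W cf])
  have f0: "\<forall>x\<in>W. 0 \<le> f x" unfolding f_def q1_def q2_def q3_def by simp
  have "integral Q f \<le> integral W f" by (rule integral_subset_le[OF QW fQ fW f0])
  have iQ: "integral Q (\<lambda>x. q1 x + q2 x + q3 x) = integral Q q1 + integral Q q2 + integral Q q3"
    using iq by (simp add: integral_add integrable_add)
  have "integral Q (\<lambda>x. q1 x + q2 x + q3 x) \<le> integral Q f"
    by (rule integral_le) (use iq fQ in \<open>auto intro!: integrable_add simp: f_def q1_def q2_def q3_def\<close>)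
  moreover have "(Mlin (k 4) (k 7) (a$3) h)^2 * h^3 / 16 \<le> integral Q q1"
    unfolding Q_def q1_def Mlin_def by (rule cube_lower[OF h])
  moreover have "(Mlin (k 5) (k 7) (a$2) h)^2 * h^3 / 16 \<le> integral Q q2"
    unfolding Q_def q2_def Mlin_def by (rule cube_lower[OF h])
  moreover have "(Mlin (k 6) (k 7) (a$1) h)^2 * h^3 / 16 \<le> integral Q q3"
    unfolding Q_def q3_def Mlin_def by (rule cube_lower[OF h])
  ultimately show ?thesis unfolding fe using \<open>integral Q f \<le> integral W f\<close> iQ
    by (simp add: algebra_simps)
qed

lemma aux_lin: "x \<le> 3 * y \<Longrightarrow> 0 \<le> y \<Longrightarrow> 16 * x \<le> 49 * (y::real)"
  by linarith

lemma patch_bounds: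
  assumes "X \<in> patch A h a"
  shows "a$i - h \<le> X$i \<and> X$i \<le> a$i + 2 * h"
proof -
  from assms obtain b y where b: "X \<in> ccell b h" "y \<in> ccell b h" "y \<in> ccell a h"
    unfolding patch_def by blast
  then have "b$i \<le> X$i" "X$i \<le> b$i + h" "b$i \<le> y$i" "y$i \<le> b$i + h" "a$i \<le> y$i" "y$i \<le> a$i + h"
    unfolding ccell_def mem_box_cart corner_nth by blast+
  then show ?thesis by linarith
qed

lemma patch_contains:
  assumes "a \<in> A" "h \<ge> 0"
  shows "ccell a h \<subseteq> patch A h a"
proof -
  have "a \<in> ccell a h" unfolding ccell_def mem_box_cart corner_nth using assms(2) by simp
  then show ?thesis unfolding patch_def using assms(1) by blast
qed

lemma patch_compact:
  assumes "finite A"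
  shows "compact (patch A h a)"
  unfolding patch_def ccell_def using assms by (intro compact_UN) auto

lemma edge_bounds:
  assumes h: "h > 0" and x: "x \<in> \<Union>(cell_edges a h)"
  shows "a$j \<le> x$j \<and> x$j \<le> a$j + h"
proof -
  from x obtain v i where v: "v \<in> cell_vertices a h" "v$i = a$i" and xe: "x \<in> edge v h i"
    unfolding cell_edges_def by blast
  from v obtain J where vJ: "v = a + h *\<^sub>R (\<chi> i. if i \<in> J then 1 else 0)" unfolding cell_vertices_def by blast
  from xe obtain u where u: "0 \<le> u" "u \<le> 1" "x = (1 - u) *\<^sub>R v + u *\<^sub>R (v + h *\<^sub>R axis i 1)"
    unfolding edge_def in_segment by blast
  have xj: "x$j = v$j + u * h * (if j = i then 1 else 0)" unfolding u(3)
    by (simp add: axis_def algebra_simps)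
  show ?thesis
  proof (cases "j = i")
    case True
    then have "x$j = a$j + u * h" using xj v(2) by simp
    moreover have "u * h \<le> h" using u h by (simp add: mult_left_le_one_le)
    ultimately show ?thesis using u h by simp
  next
    case False
    then have "x$j = a$j + h * (if j \<in> J then 1 else 0)" using xj vJ by simp
    then show ?thesis using h by simp
  qed
qed

lemma centroid_bounds:
  fixes S :: "(real^3) set"
  assumes "card S = 3" and b: "\<And>x. x \<in> S \<Longrightarrow> lo \<le> x$j \<and> x$j \<le> hi"
  shows "lo \<le> ((1/3) *\<^sub>R sum id S)$j \<and> ((1/3) *\<^sub>R sum id S)$j \<le> hi"
proof -
  have fin: "finite S" using assms(1) card.infinite by fastforce
  have e: "((1/3) *\<^sub>R sum id S)$j = (\<Sum>x\<in>S. x$j) / 3" by (simp add: sum_component)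
  have "(\<Sum>x\<in>S. lo) \<le> (\<Sum>x\<in>S. x$j)" using b by (intro sum_mono) auto
  moreover have "(\<Sum>x\<in>S. x$j) \<le> (\<Sum>x\<in>S. hi)" using b by (intro sum_mono) auto
  ultimately show ?thesis unfolding e using assms(1) by simp
qed

theorem lemma4p5:
  fixes \<Omega> :: "(real^3) set"
  assumes "open \<Omega>" and "connected \<Omega>"
    and "\<exists>B :: ((real^3) \<times> (real^3)) set. finite B \<and> \<Omega> = interior (\<Union>(u, w)\<in>B. cbox u w)"
  shows "\<exists>C::real. \<forall>h org A \<Gamma> Om Op bm bp a S n D p.
     cartesian_mesh \<Omega> h org A \<and> interface \<Omega> \<Gamma> Om Op \<and> mesh_interface_ok \<Gamma> h A \<and>
     (\<exists>r. reach_ok \<Gamma> Om Op r \<and> 3 * sqrt 3 * h < r) \<and>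
     0 < bm \<and> bm \<le> bp \<and>
     a \<in> A \<and> \<Gamma> \<inter> cell a h \<noteq> {} \<and>
     K_select \<Gamma> Om a h S \<and> D \<in> S \<and> norm n = 1 \<and> (\<forall>x\<in>S. \<forall>y\<in>S. (x - y) \<bullet> n = 0) \<and>
     p \<in> Q1
     \<longrightarrow>
     (let W = patch A h a; F = (1/3) *\<^sub>R sum id S;
          vm = p; vp = C_T bm bp F n D p;
          jump = (\<lambda>X. bp * (grad vp X \<bullet> n) - bm * (grad vm X \<bullet> n))
      in L2_plane W D n jump \<le> C * (bp - bm) * sqrt h * H2_semi W vp \<and>
         L2_plane W D n jump \<le> C * (bp - bm) * sqrt h * H2_semi W vm)"
proof (intro exI[of _ "3000::real"] allI impI)
  fix h bm bp :: real and org a n D :: "real^3" and A \<Gamma> Om Op S :: "(real^3) set"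
    and p :: "real^3 \<Rightarrow> real"
  assume H: "cartesian_mesh \<Omega> h org A \<and> interface \<Omega> \<Gamma> Om Op \<and> mesh_interface_ok \<Gamma> h A \<and>
     (\<exists>r. reach_ok \<Gamma> Om Op r \<and> 3 * sqrt 3 * h < r) \<and>
     0 < bm \<and> bm \<le> bp \<and>
     a \<in> A \<and> \<Gamma> \<inter> cell a h \<noteq> {} \<and>
     K_select \<Gamma> Om a h S \<and> D \<in> S \<and> norm n = 1 \<and> (\<forall>x\<in>S. \<forall>y\<in>S. (x - y) \<bullet> n = 0) \<and>
     p \<in> Q1"
  have h: "h > 0" and finA: "finite A" using H unfolding cartesian_mesh_def by auto
  have bm: "0 < bm" "bm \<le> bp" and aA: "a \<in> A" and KS: "K_select \<Gamma> Om a h S" and DS: "D \<in> S"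
    and n: "norm n = 1" and pQ: "p \<in> Q1" using H by auto
  have bp: "bp > 0" using bm by linarith
  obtain k where pk: "p = tri k" using Q1_tri[OF pQ] by blast
  define W where "W = patch A h a"
  define F :: "real^3" where "F = (1/3) *\<^sub>R sum id S"
  have S3: "card S = 3" and SP: "S \<subseteq> cut_points \<Gamma> a h" using KS unfolding K_select_def Let_def by auto
  have Sb: "a$j \<le> x$j \<and> x$j \<le> a$j + h" if "x \<in> S" for x j
    using edge_bounds[OF h] SP that unfolding cut_points_def by blast
  have Fb: "a$j \<le> F$j \<and> F$j \<le> a$j + h" for j
    unfolding F_def by (rule centroid_bounds[OF S3]) (rule Sb)
  have Xb: "a$i - h \<le> X$i \<and> X$i \<le> a$i + 2 * h" if "X \<in> W" for X i
    using patch_bounds that unfolding W_def by blast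
  define M12 where "M12 = Mlin (k 4) (k 7) (a$3) h"
  define M13 where "M13 = Mlin (k 5) (k 7) (a$2) h"
  define M23 where "M23 = Mlin (k 6) (k 7) (a$1) h"
  define Sg where "Sg = M12 + M13 + M23"
  have M0: "M12 \<ge> 0" "M13 \<ge> 0" "M23 \<ge> 0" unfolding M12_def M13_def M23_def Mlin_def by auto
  have Sg0: "Sg \<ge> 0" unfolding Sg_def using M0 by simp
  define jump where "jump = (\<lambda>X. bp * (grad (C_T bm bp F n D p) X \<bullet> n) - bm * (grad p X \<bullet> n))"
  have jb: "\<bar>jump X\<bar> \<le> (bp - bm) * (12 * h * Sg)" if "X \<in> W" for X
  proof -
    have "jump X = (bp - bm) * (grad (tri k) X \<bullet> n - grad (tri k) F \<bullet> n)"
      unfolding jump_def pk by (rule jump_eq[OF bp n])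
    moreover have "\<bar>grad (tri k) X \<bullet> n - grad (tri k) F \<bullet> n\<bar> \<le> 12 * h * Sg"
      unfolding Sg_def M12_def M13_def M23_def
      by (rule Gdiff_bound[OF h _ _ n]) (use Xb[OF that] Fb in auto)
    ultimately show ?thesis using bm by (simp add: abs_mult mult_left_mono)
  qed
  have Db: "norm (X - D) \<le> 6 * h" if "X \<in> W" for X
  proof -
    have d: "\<bar>(X - D)$i\<bar> \<le> 2 * h" for i using Xb[OF that, of i] Sb[OF DS, of i] by auto
    have "norm (X - D) \<le> (\<Sum>i\<in>UNIV. \<bar>(X - D)$i\<bar>)" by (rule norm_le_l1_cart)
    also have "\<dots> \<le> 6 * h" unfolding sum_3 using d[of 1] d[of 2] d[of 3] by linarith
    finally show ?thesis .
  qed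
  have L2b: "L2_plane W D n jump \<le> (bp - bm) * (12 * h * Sg) * (2 * (6 * h))"
    by (rule plane_upper[OF n]) (use jb Db bm h Sg0 in auto)
  define I where "I = integral W (\<lambda>x. \<Sum>i\<in>UNIV. \<Sum>j\<in>UNIV. (partial i (partial j p) x)\<^sup>2)"
  have H2m: "H2_semi W p = sqrt I" unfolding H2_semi_def I_def ..
  have H2p: "H2_semi W (C_T bm bp F n D p) = sqrt I"
    unfolding H2_semi_def I_def pk CT_tri partial_tri dco2_addlin ..
  have Ilow: "h^3 / 16 * (M12^2 + M13^2 + M23^2) \<le> I"
    unfolding I_def pk M12_def M13_def M23_def
    by (rule H2_lower[OF h]) (use patch_compact[OF finA] patch_contains[OF aA] h in \<open>auto simp: W_def\<close>)
  have "3 * (M12^2 + M13^2 + M23^2) - Sg^2 = (M12 - M13)^2 + (M12 - M23)^2 + (M13 - M23)^2"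
    unfolding Sg_def by (simp add: power2_eq_square algebra_simps)
  moreover have "(M12 - M13)^2 + (M12 - M23)^2 + (M13 - M23)^2 \<ge> 0" by simp
  ultimately have "Sg^2 \<le> 3 * (M12^2 + M13^2 + M23^2)" by linarith
  then have "(h^2 * Sg / 7)^2 \<le> h * I"
  proof -
    assume s: "Sg^2 \<le> 3 * (M12^2 + M13^2 + M23^2)"
    have "(h^2 * Sg / 7)^2 = h * (h^3 * Sg^2 / 49)" by (simp add: power2_eq_square power3_eq_cube)
    also have "\<dots> \<le> h * (h^3 / 16 * (M12^2 + M13^2 + M23^2))"
    proof -
      have Qs0: "M12^2 + M13^2 + M23^2 \<ge> 0" by simp
      have q0: "16 * Sg^2 \<le> 49 * (M12^2 + M13^2 + M23^2)"
        by (rule aux_lin[OF s Qs0])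
      have q: "Sg^2 / 49 \<le> (M12^2 + M13^2 + M23^2) / 16"
        using q0 by (simp add: field_simps)
      have "h^3 * (Sg^2 / 49) \<le> h^3 * ((M12^2 + M13^2 + M23^2) / 16)"
        using q h by (intro mult_left_mono) auto
      then show ?thesis using h by (intro mult_left_mono) auto
    qed
    also have "\<dots> \<le> h * I" using Ilow h by (intro mult_left_mono) auto
    finally show ?thesis .
  qed
  then have "h^2 * Sg / 7 \<le> sqrt (h * I)" by (rule real_le_rsqrt)
  then have sq: "h^2 * Sg / 7 \<le> sqrt h * sqrt I" by (simp add: real_sqrt_mult)
  have fin: "L2_plane W D n jump \<le> 3000 * (bp - bm) * sqrt h * sqrt I"
  proof -
    have "(bp - bm) * (12 * h * Sg) * (2 * (6 * h)) = (bp - bm) * 1008 * (h^2 * Sg / 7)"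
      by (simp add: power2_eq_square)
    also have "\<dots> \<le> (bp - bm) * 3000 * (sqrt h * sqrt I)"
      using sq bm h Sg0 by (intro mult_mono) auto
    finally show ?thesis using L2b by (simp add: algebra_simps)
  qed
  show "let W = patch A h a; F = (1/3) *\<^sub>R sum id S;
          vm = p; vp = C_T bm bp F n D p;
          jump = (\<lambda>X. bp * (grad vp X \<bullet> n) - bm * (grad vm X \<bullet> n))
      in L2_plane W D n jump \<le> 3000 * (bp - bm) * sqrt h * H2_semi W vp \<and>
         L2_plane W D n jump \<le> 3000 * (bp - bm) * sqrt h * H2_semi W vm"
    unfolding Let_def F_def[symmetric] W_def[symmetric] jump_def[symmetric] H2m H2p using fin by simp
qed

end
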